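(* Let $P,\tilde P\in\mathbb{R}^{n\times m}$ with $\mathrm{rank}(P)=n$, and let $\Omega=c+G\mathbf{B}_p$ with $c\in\mathbb{R}^m$, $G\in\mathbb{R}^{m\times p}$, $\mathrm{rank}(G)=m$. Assume $\|(\tilde P-P)c\|\le\|PG\|_l$. Then $\tilde P(c+\alpha G\mathbf{B}_p)\subseteq P\Omega$ for every $\alpha\in[0,\alpha_m]$, where $$\alpha_m=\frac{\|PG\|_l-\|(\tilde P-P)c\|}{\|PG\|_l+\|(\tilde P-P)G\|}.$$
   Context: A norm $\|\cdot\|$ is fixed on each $\mathbb{R}^k$; $\mathbf{B}_k$ is its closed unit ball, and matrices carry the induced operator norms $\|M\|=\sup_{\|x\|\le1}\|Mx\|$. For $M\in\mathbb{R}^{n\times m}\setminus\{0\}$ the matrix lower bound is $\|M\|_l=\max\{\mu\in\mathbb{R}:\ \forall y\in\mathrm{col}(M)\ \exists x\in\mathbb{R}^m \text{ with } Mx=y \text{ and } \mu\|x\|\le\|y\|\}$, where $\mathrm{col}(M)$ is the column space. Minkowski sums and images of sets under matrices are used. *)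

theory Defs
  imports "HOL-Analysis.Analysis"
begin

definition is_norm :: "('a::real_vector \<Rightarrow> real) \<Rightarrow> bool" where
  "is_norm N \<longleftrightarrow>
     (\<forall>x. 0 \<le> N x) \<and> (\<forall>x. N x = 0 \<longleftrightarrow> x = 0) \<and>
     (\<forall>a x. N (a *\<^sub>R x) = \<bar>a\<bar> * N x) \<and> (\<forall>x y. N (x + y) \<le> N x + N y)"

definition unit_ball :: "('a \<Rightarrow> real) \<Rightarrow> 'a set" where
  "unit_ball N = {x. N x \<le> 1}"

definition op_norm :: "(real^'m \<Rightarrow> real) \<Rightarrow> (real^'n \<Rightarrow> real) \<Rightarrow> real^'m^'n \<Rightarrow> real" where
  "op_norm Nm Nn M = Sup ((\<lambda>x. Nn (M *v x)) ` unit_ball Nm)"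

text \<open>Matrix lower bound (defined for M \<noteq> 0):
  max { mu | \<forall>y \<in> col M. \<exists>x. M x = y \<and> mu * Nm x \<le> Nn y }.\<close>
definition lower_bound :: "(real^'m \<Rightarrow> real) \<Rightarrow> (real^'n \<Rightarrow> real) \<Rightarrow> real^'m^'n \<Rightarrow> real" where
  "lower_bound Nm Nn M =
     (GREATEST mu. \<forall>y \<in> range (\<lambda>x. M *v x). \<exists>x. M *v x = y \<and> mu * Nm x \<le> Nn y)"

end

theory Submission
  imports Defs
begin

lemma isn_0: "is_norm N \<Longrightarrow> N 0 = 0" by (simp add: is_norm_def)
lemma isn_nonneg: "is_norm N \<Longrightarrow> 0 \<le> N x" by (simp add: is_norm_def)
lemma isn_scale: "is_norm N \<Longrightarrow> N (a *\<^sub>R x) = \<bar>a\<bar> * N x" by (simp add: is_norm_def)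
lemma isn_tri: "is_norm N \<Longrightarrow> N (x + y) \<le> N x + N y" by (simp add: is_norm_def)
lemma isn_eq0: "is_norm N \<Longrightarrow> N x = 0 \<longleftrightarrow> x = 0" by (simp add: is_norm_def)
lemma isn_minus: "is_norm N \<Longrightarrow> N (- x) = N x"
  using isn_scale[of N "-1" x] by simp

lemma isn_sum: assumes "is_norm N" shows "N (sum f A) \<le> (\<Sum>a\<in>A. N (f a))"
proof (induction A rule: infinite_finite_induct)
  case (infinite A) then show ?case using isn_0[OF assms] by simp
next
  case empty then show ?case using isn_0[OF assms] by simp
next
  case (insert x F)
  then show ?case using isn_tri[OF assms, of "f x" "sum f F"] by simp
qed

lemma isn_upper:
  fixes N :: "'a::euclidean_space \<Rightarrow> real"
  assumes "is_norm N" shows "\<exists>C\<ge>0. \<forall>x. N x \<le> C * norm x"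
proof (intro exI[of _ "\<Sum>b\<in>Basis. N b"] conjI allI)
  show "0 \<le> (\<Sum>b\<in>Basis. N b)" by (simp add: sum_nonneg isn_nonneg[OF assms])
  fix x :: 'a
  have "N x = N (\<Sum>b\<in>Basis. (x \<bullet> b) *\<^sub>R b)" by (simp add: euclidean_representation)
  also have "\<dots> \<le> (\<Sum>b\<in>Basis. N ((x \<bullet> b) *\<^sub>R b))" by (rule isn_sum[OF assms])
  also have "\<dots> = (\<Sum>b\<in>Basis. \<bar>x \<bullet> b\<bar> * N b)" by (simp add: isn_scale[OF assms])
  also have "\<dots> \<le> (\<Sum>b\<in>Basis. norm x * N b)"
    by (intro sum_mono mult_right_mono isn_nonneg[OF assms]) (simp add: Basis_le_norm)
  also have "\<dots> = (\<Sum>b\<in>Basis. N b) * norm x" by (simp add: sum_distrib_left mult.commute)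
  finally show "N x \<le> (\<Sum>b\<in>Basis. N b) * norm x" .
qed

lemma isn_cont:
  fixes N :: "'a::euclidean_space \<Rightarrow> real"
  assumes "is_norm N" shows "continuous_on S N"
proof -
  obtain C where C: "C \<ge> 0" "\<And>x. N x \<le> C * norm x" using isn_upper[OF assms] by blast
  have "lipschitz_on C S N"
  proof (rule lipschitz_onI)
    fix x y assume "x \<in> S" "y \<in> S"
    have "N x \<le> N y + N (x - y)" using isn_tri[OF assms, of y "x - y"] by simp
    moreover have "N y \<le> N x + N (y - x)" using isn_tri[OF assms, of x "y - x"] by simp
    moreover have "N (y - x) = N (x - y)" using isn_minus[OF assms, of "x - y"] by simp
    ultimately have "dist (N x) (N y) \<le> N (x - y)" by (simp add: dist_real_def abs_le_iff)
    also have "\<dots> \<le> C * dist x y" using C(2)[of "x - y"] by (simp add: dist_norm)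
    finally show "dist (N x) (N y) \<le> C * dist x y" .
  qed (use C in auto)
  then show ?thesis by (rule lipschitz_on_continuous_on)
qed

lemma isn_lower:
  fixes N :: "'a::euclidean_space \<Rightarrow> real"
  assumes "is_norm N" shows "\<exists>c>0. \<forall>x. c * norm x \<le> N x"
proof -
  have "compact (sphere (0::'a) 1)" by simp
  moreover have "sphere (0::'a) 1 \<noteq> {}" by simp
  ultimately have "\<exists>x\<in>sphere (0::'a) 1. \<forall>y\<in>sphere 0 1. N x \<le> N y"
    by (rule continuous_attains_inf[OF _ _ isn_cont[OF assms]])
  then obtain x0 where x0: "x0 \<in> sphere 0 1" "\<And>y. y \<in> sphere 0 1 \<Longrightarrow> N x0 \<le> N y"
    by blast
  have "x0 \<noteq> 0" using x0 by auto
  then have pos: "N x0 > 0" using isn_eq0[OF assms, of x0] isn_nonneg[OF assms, of x0] by linarith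
  show ?thesis
  proof (intro exI[of _ "N x0"] conjI allI pos)
    fix x :: 'a
    show "N x0 * norm x \<le> N x"
    proof (cases "x = 0")
      case True then show ?thesis by (simp add: isn_0[OF assms])
    next
      case False
      have "N x0 \<le> N ((1 / norm x) *\<^sub>R x)" using False by (intro x0(2)) simp
      also have "\<dots> = N x / norm x" by (simp add: isn_scale[OF assms])
      finally show ?thesis using False by (simp add: field_simps)
    qed
  qed
qed


lemma opn:
  fixes Nm :: "real^'m \<Rightarrow> real" and Nn :: "real^'n \<Rightarrow> real" and M :: "real^'m^'n"
  assumes m: "is_norm Nm" and n: "is_norm Nn"
  shows "Nn (M *v x) \<le> op_norm Nm Nn M * Nm x" "0 \<le> op_norm Nm Nn M"
proof -
  obtain Cn where Cn: "Cn \<ge> 0" "\<And>y. Nn y \<le> Cn * norm y" using isn_upper[OF n] by blast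
  obtain c where c: "c > 0" "\<And>x. c * norm x \<le> Nm x" using isn_lower[OF m] by blast
  obtain K0 where K0: "\<And>x. norm (M *v x) \<le> norm x * K0"
    using bounded_linear.bounded[OF matrix_vector_mul_bounded_linear[of M]] by blast
  define K where "K = \<bar>K0\<bar>"
  have K: "norm (M *v x) \<le> norm x * K" for x
    using K0[of x] unfolding K_def by (meson abs_ge_self mult_left_mono norm_ge_zero order_trans)
  have K0: "K \<ge> 0" unfolding K_def by simp
  let ?A = "(\<lambda>x. Nn (M *v x)) ` unit_ball Nm"
  have bdd: "bdd_above ?A"
  proof (rule bdd_aboveI2)
    fix x assume x: "x \<in> unit_ball Nm"
    have "norm x \<le> 1 / c" using c(2)[of x] x c(1) by (simp add: unit_ball_def field_simps)
    have "Nn (M *v x) \<le> Cn * (norm x * K)" using Cn(2)[of "M *v x"] K[of x] Cn(1)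
      by (meson mult_left_mono order_trans)
    also have "\<dots> \<le> Cn * (1 / c * K)"
      using \<open>norm x \<le> 1 / c\<close> Cn(1) K0 by (intro mult_left_mono mult_right_mono) auto
    finally show "Nn (M *v x) \<le> Cn * (1 / c * K)" .
  qed
  have ub: "Nn (M *v x) \<le> op_norm Nm Nn M" if "Nm x \<le> 1" for x
    unfolding op_norm_def by (rule cSup_upper[OF _ bdd]) (use that in \<open>auto simp: unit_ball_def\<close>)
  show "0 \<le> op_norm Nm Nn M" using ub[of 0] by (simp add: isn_0[OF m] isn_0[OF n])
  show "Nn (M *v x) \<le> op_norm Nm Nn M * Nm x"
  proof (cases "x = 0")
    case True then show ?thesis by (simp add: isn_0[OF m] isn_0[OF n])
  next
    case False
    then have pos: "Nm x > 0" using isn_eq0[OF m, of x] isn_nonneg[OF m, of x] by linarith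
    have "Nm ((1 / Nm x) *\<^sub>R x) \<le> 1" using pos by (simp add: isn_scale[OF m])
    then have "Nn (M *v ((1 / Nm x) *\<^sub>R x)) \<le> op_norm Nm Nn M" by (rule ub)
    then have "Nn (M *v x) / Nm x \<le> op_norm Nm Nn M"
      using pos by (simp add: matrix_vector_mult_scaleR isn_scale[OF n])
    then show ?thesis using pos by (simp add: field_simps)
  qed
qed

lemma lbp:
  fixes Np :: "real^'p \<Rightarrow> real" and Nn :: "real^'n \<Rightarrow> real" and M :: "real^'p^'n"
  assumes p: "is_norm Np" and n: "is_norm Nn" and s: "surj ((*v) M)"
  shows "\<exists>x. M *v x = y \<and> lower_bound Np Nn M * Np x \<le> Nn y"
proof -
  obtain c where c: "c > 0" "\<And>x. c * norm x \<le> Np x" using isn_lower[OF p] by blast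
  have ex: "\<exists>xy. M *v xy = y \<and> (\<forall>x. M *v x = y \<longrightarrow> Np xy \<le> Np x)" for y
  proof -
    obtain x0 where x0: "M *v x0 = y" using s by (metis surjD)
    let ?T = "{x. M *v x = y} \<inter> {x. Np x \<le> Np x0}"
    have cl: "closed ?T"
      by (intro closed_Int closed_Collect_eq closed_Collect_le isn_cont[OF p] continuous_on_const
            linear_continuous_on matrix_vector_mul_bounded_linear)
    have "bounded ?T"
      unfolding bounded_iff
    proof (intro exI ballI)
      fix x assume "x \<in> ?T"
      then show "norm x \<le> Np x0 / c" using c(2)[of x] c(1) by (simp add: field_simps)
    qed
    then have "compact ?T" using cl by (simp add: compact_eq_bounded_closed)
    moreover have "?T \<noteq> {}" using x0 by auto
    ultimately have "\<exists>x\<in>?T. \<forall>z\<in>?T. Np x \<le> Np z"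
      by (rule continuous_attains_inf[OF _ _ isn_cont[OF p]])
    then obtain xy where xy: "xy \<in> ?T" "\<And>z. z \<in> ?T \<Longrightarrow> Np xy \<le> Np z"
      by blast
    show ?thesis
    proof (intro exI[of _ xy] conjI allI impI)
      show "M *v xy = y" using xy(1) by simp
      fix x assume "M *v x = y"
      show "Np xy \<le> Np x"
      proof (cases "Np x \<le> Np x0")
        case True then show ?thesis using xy(2)[of x] \<open>M *v x = y\<close> by simp
      next
        case False then show ?thesis using xy(1) by simp
      qed
    qed
  qed
  then have "\<forall>y. \<exists>xy. M *v xy = y \<and> (\<forall>x. M *v x = y \<longrightarrow> Np xy \<le> Np x)" by blast
  then have "\<exists>m. \<forall>y. M *v m y = y \<and> (\<forall>x. M *v x = y \<longrightarrow> Np (m y) \<le> Np x)" by (rule choice)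
  then obtain m where m: "\<And>y. M *v m y = y" "\<And>y x. M *v x = y \<Longrightarrow> Np (m y) \<le> Np x"
    by blast
  define Q where "Q = (\<lambda>mu. \<forall>y \<in> range (\<lambda>x. M *v x). \<exists>x. M *v x = y \<and> mu * Np x \<le> Nn y)"
  define S where "S = {mu. \<forall>y. mu * Np (m y) \<le> Nn y}"
  have QS: "Q mu \<longleftrightarrow> mu \<in> S" for mu
  proof
    assume "Q mu"
    show "mu \<in> S" unfolding S_def
    proof (intro CollectI allI)
      fix y
      obtain x where x: "M *v x = y" "mu * Np x \<le> Nn y" using \<open>Q mu\<close> s unfolding Q_def by (metis rangeI surjD)
      show "mu * Np (m y) \<le> Nn y"
      proof (cases "mu \<ge> 0")
        case True then show ?thesis using m(2)[OF x(1)] x(2) by (meson mult_left_mono order_trans)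
      next
        case False then show ?thesis using isn_nonneg[OF p, of "m y"] isn_nonneg[OF n, of y]
          by (meson mult_nonpos_nonneg nle_le order_trans)
      qed
    qed
  next
    assume "mu \<in> S" then show "Q mu" unfolding Q_def S_def using m(1) by blast
  qed
  define y0 :: "real^'n" where "y0 = 1"
  have "y0 \<noteq> 0" unfolding y0_def by (simp add: vec_eq_iff)
  then have "m y0 \<noteq> 0" using m(1)[of y0] by auto
  then have np0: "Np (m y0) > 0" using isn_eq0[OF p, of "m y0"] isn_nonneg[OF p, of "m y0"] by linarith
  have bdd: "bdd_above S"
  proof (rule bdd_aboveI)
    fix mu assume "mu \<in> S"
    then have "mu * Np (m y0) \<le> Nn y0" unfolding S_def by blast
    then show "mu \<le> Nn y0 / Np (m y0)" using np0 by (simp add: field_simps)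
  qed
  have "0 \<in> S" unfolding S_def using isn_nonneg[OF n] by simp
  then have ne: "S \<noteq> {}" by blast
  have inS': "\<forall>y. Sup S * Np (m y) \<le> Nn y"
  proof (intro allI)
    fix y
    show "Sup S * Np (m y) \<le> Nn y"
    proof (cases "Np (m y) = 0")
      case True then show ?thesis using isn_nonneg[OF n, of y] by simp
    next
      case False
      then have pos: "Np (m y) > 0" using isn_nonneg[OF p, of "m y"] by linarith
      have "Sup S \<le> Nn y / Np (m y)"
      proof (rule cSup_least[OF ne])
        fix mu assume "mu \<in> S"
        then have "mu * Np (m y) \<le> Nn y" unfolding S_def by blast
        then show "mu \<le> Nn y / Np (m y)" using pos by (simp add: field_simps)
      qed
      then show ?thesis using pos by (simp add: field_simps)
    qed
  qed
  have inS: "Sup S \<in> S" using inS' unfolding S_def by simp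
  have "lower_bound Np Nn M = Sup S"
    unfolding lower_bound_def
  proof (rule Greatest_equality)
    show "\<forall>y\<in>range ((*v) M). \<exists>x. M *v x = y \<and> Sup S * Np x \<le> Nn y"
      using QS[of "Sup S"] inS unfolding Q_def by simp
  next
    fix mu assume "\<forall>y\<in>range ((*v) M). \<exists>x. M *v x = y \<and> mu * Np x \<le> Nn y"
    then have "mu \<in> S" using QS[of mu] unfolding Q_def by simp
    then show "mu \<le> Sup S" by (rule cSup_upper[OF _ bdd])
  qed
  then show ?thesis using inS m(1)[of y] unfolding S_def by auto
qed


theorem lemma6:
  fixes Nn :: "real^'n \<Rightarrow> real" and Nm :: "real^'m \<Rightarrow> real" and Np :: "real^'p \<Rightarrow> real"
    and P Pt :: "real^'m^'n" and c :: "real^'m" and G :: "real^'p^'m" and \<alpha> :: real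
  assumes "is_norm Nn" and "is_norm Nm" and "is_norm Np"
    and "rank P = CARD('n)"
    and "rank G = CARD('m)"
    and "Nn ((Pt - P) *v c) \<le> lower_bound Np Nn (P ** G)"
    and "0 \<le> \<alpha>"
    and "\<alpha> \<le> (lower_bound Np Nn (P ** G) - Nn ((Pt - P) *v c)) /
               (lower_bound Np Nn (P ** G) + op_norm Np Nn ((Pt - P) ** G))"
  shows "(\<lambda>x. Pt *v x) ` ((\<lambda>z. c + \<alpha> *\<^sub>R (G *v z)) ` unit_ball Np)
           \<subseteq> (\<lambda>x. P *v x) ` ((\<lambda>z. c + G *v z) ` unit_ball Np)"
proof
  note n = assms(1) and p = assms(3)
  define L where "L = lower_bound Np Nn (P ** G)"
  define K where "K = op_norm Np Nn ((Pt - P) ** G)"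
  define e where "e = Nn ((Pt - P) *v c)"
  have sP: "surj ((*v) P)" using assms(4) full_rank_surjective by blast
  have sG: "surj ((*v) G)" using assms(5) full_rank_surjective by blast
  have sPG: "surj ((*v) (P ** G))"
    by (metis (no_types, lifting) matrix_vector_mul_assoc sG sP surj_def)
  have K0: "K \<ge> 0" unfolding K_def by (rule opn(2)[OF p n])
  have e0: "e \<ge> 0" unfolding e_def by (rule isn_nonneg[OF n])
  have eL: "e \<le> L" using assms(6) unfolding e_def L_def .
  have al: "\<alpha> \<le> (L - e) / (L + K)" using assms(8) unfolding e_def L_def K_def .
  fix y assume "y \<in> (\<lambda>x. Pt *v x) ` ((\<lambda>z. c + \<alpha> *\<^sub>R (G *v z)) ` unit_ball Np)"
  then obtain z where z: "Np z \<le> 1" and y: "y = Pt *v (c + \<alpha> *\<^sub>R (G *v z))"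
    by (auto simp: unit_ball_def)
  define v where "v = (Pt - P) *v c + \<alpha> *\<^sub>R (((Pt - P) ** G) *v z)"
  have "\<exists>w'. (P ** G) *v w' = v \<and> Np w' \<le> 1 - \<alpha>"
  proof (cases "L = 0")
    case True
    then have "e = 0" using e0 eL by simp
    then have "\<alpha> = 0" using al assms(7) True by simp
    have "(Pt - P) *v c = 0" using \<open>e = 0\<close> isn_eq0[OF n] unfolding e_def by blast
    then have "v = 0" unfolding v_def using \<open>\<alpha> = 0\<close> by simp
    then show ?thesis using \<open>\<alpha> = 0\<close> by (intro exI[of _ 0]) (simp add: isn_0[OF p])
  next
    case False
    then have Lpos: "L > 0" using e0 eL by simp
    then have LK: "L + K > 0" using K0 by simp
    have al2: "\<alpha> * (L + K) \<le> L - e" using al LK by (simp add: field_simps)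
    obtain w' where w': "(P ** G) *v w' = v" "L * Np w' \<le> Nn v"
      using lbp[OF p n sPG, of v] unfolding L_def by blast
    have "Nn v \<le> e + Nn (\<alpha> *\<^sub>R (((Pt - P) ** G) *v z))"
      unfolding v_def e_def by (rule isn_tri[OF n])
    also have "\<dots> = e + \<alpha> * Nn (((Pt - P) ** G) *v z)"
      using assms(7) by (simp add: isn_scale[OF n])
    also have "\<dots> \<le> e + \<alpha> * (K * Np z)"
      using opn(1)[OF p n, of "(Pt - P) ** G" z] assms(7) unfolding K_def
      by (simp add: mult_left_mono)
    also have "\<dots> \<le> e + \<alpha> * K"
      using z assms(7) K0 by (simp add: mult_left_le mult_left_mono)
    finally have "L * Np w' \<le> e + \<alpha> * K" using w'(2) by linarith
    also have "\<dots> \<le> L * (1 - \<alpha>)" using al2 by (simp add: algebra_simps)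
    finally have "Np w' \<le> 1 - \<alpha>" using Lpos by simp
    then show ?thesis using w'(1) by blast
  qed
  then obtain w' where w': "(P ** G) *v w' = v" "Np w' \<le> 1 - \<alpha>" by blast
  define w where "w = \<alpha> *\<^sub>R z + w'"
  have "Np w \<le> \<alpha> * Np z + Np w'"
    unfolding w_def using isn_tri[OF p, of "\<alpha> *\<^sub>R z" w'] assms(7) by (simp add: isn_scale[OF p])
  also have "\<dots> \<le> \<alpha> + (1 - \<alpha>)" using z w'(2) assms(7) mult_left_le[of "Np z" \<alpha>] by linarith
  finally have wb: "w \<in> unit_ball Np" by (simp add: unit_ball_def)
  have "P *v (c + G *v w) = y"
    unfolding y w_def using w'(1)
    by (simp add: v_def matrix_vector_right_distrib matrix_vector_mult_scaleR
        matrix_vector_mul_assoc[symmetric] matrix_vector_mult_diff_rdistrib algebra_simps)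
  then show "y \<in> (\<lambda>x. P *v x) ` ((\<lambda>z. c + G *v z) ` unit_ball Np)" using wb by blast
qed

end
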